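(* Let $n\geq 5$ be an odd integer. Then $\beta_3(J_n)=3n$.
   Context: Flower snark $J_n$ ($n\geq 5$ odd): take $n$ disjoint stars $K_{1,3}$, the $i$th with vertices $T_i=\{a_i,b_i,c_i,d_i\}$, centre $b_i$ and leaves $a_i,c_i,d_i$; add the cycle $a_1a_2\cdots a_na_1$ and the cycle $c_1c_2\cdots c_nd_1d_2\cdots d_nc_1$. $d$ is the shortest-path distance, $d(s,X)=\min_{x\in X}d(s,x)$ for nonempty $X$, $\mathcal{D}_S(X)=(d(s_1,X),\dots,d(s_k,X))$. $S$ is a $\{3\}$-resolving set if $\mathcal{D}_S(X)\neq\mathcal{D}_S(Y)$ for all distinct nonempty vertex sets $X,Y$ with $|X|,|Y|\leq 3$; $\beta_3(J_n)$ is the minimum size of such a set. *)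

theory Defs
  imports Main
begin

text \<open>Flower snark J_n. Vertex (i,k) with i < n (0-based index of the star)
 and k = 0,1,2,3 standing for a_i, b_i, c_i, d_i respectively.\<close>

definition fs_verts :: "nat \<Rightarrow> (nat \<times> nat) set" where
  "fs_verts n = {0..<n} \<times> {0..<4}"

definition fs_arc :: "nat \<Rightarrow> nat \<times> nat \<Rightarrow> nat \<times> nat \<Rightarrow> bool" where
  "fs_arc n u v \<longleftrightarrow>
     (\<exists>i<n.
        (u = (i,1) \<and> v = (i,0)) \<or> (u = (i,1) \<and> v = (i,2)) \<or> (u = (i,1) \<and> v = (i,3))
      \<or> (u = (i,0) \<and> v = ((i+1) mod n, 0))
      \<or> (i + 1 < n \<and> u = (i,2) \<and> v = (i+1,2))
      \<or> (i + 1 < n \<and> u = (i,3) \<and> v = (i+1,3))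
      \<or> (i + 1 = n \<and> u = (i,2) \<and> v = (0,3))
      \<or> (i + 1 = n \<and> u = (i,3) \<and> v = (0,2)))"

definition fs_adj :: "nat \<Rightarrow> nat \<times> nat \<Rightarrow> nat \<times> nat \<Rightarrow> bool" where
  "fs_adj n u v \<longleftrightarrow> fs_arc n u v \<or> fs_arc n v u"

definition fs_dist :: "nat \<Rightarrow> nat \<times> nat \<Rightarrow> nat \<times> nat \<Rightarrow> nat" where
  "fs_dist n u v = (LEAST k. (fs_adj n ^^ k) u v)"

definition fs_setdist :: "nat \<Rightarrow> nat \<times> nat \<Rightarrow> (nat \<times> nat) set \<Rightarrow> nat" where
  "fs_setdist n s X = Min ((\<lambda>x. fs_dist n s x) ` X)"

definition three_resolving :: "nat \<Rightarrow> (nat \<times> nat) set \<Rightarrow> bool" where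
  "three_resolving n S \<longleftrightarrow> S \<subseteq> fs_verts n \<and>
     (\<forall>X Y. X \<subseteq> fs_verts n \<longrightarrow> Y \<subseteq> fs_verts n \<longrightarrow> X \<noteq> {} \<longrightarrow> Y \<noteq> {} \<longrightarrow>
        card X \<le> 3 \<longrightarrow> card Y \<le> 3 \<longrightarrow> X \<noteq> Y \<longrightarrow>
        (\<exists>s\<in>S. fs_setdist n s X \<noteq> fs_setdist n s Y))"

definition beta3 :: "nat \<Rightarrow> nat" where
  "beta3 n = (LEAST k. \<exists>S. three_resolving n S \<and> card S = k)"

end

theory Submission imports Defs begin

definition nx :: "nat \<Rightarrow> nat \<Rightarrow> nat" where "nx n i = (if i+1<n then i+1 else 0)"
definition pv :: "nat \<Rightarrow> nat \<Rightarrow> nat" where "pv n i = (if i=0 then n-1 else i-1)"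

lemma mod_nx: assumes "i < n" shows "(i+1) mod n = nx n i"
proof (cases "i+1<n")
  case True then show ?thesis by (simp add: nx_def)
next
  case False then have "i+1 = n" using assms by simp
  then show ?thesis by (simp add: nx_def)
qed

lemma arc_alt: "fs_arc n u v \<longleftrightarrow>
     (\<exists>i<n.
        (u = (i,1) \<and> v = (i,0)) \<or> (u = (i,1) \<and> v = (i,2)) \<or> (u = (i,1) \<and> v = (i,3))
      \<or> (u = (i,0) \<and> v = (nx n i, 0))
      \<or> (i + 1 < n \<and> u = (i,2) \<and> v = (i+1,2))
      \<or> (i + 1 < n \<and> u = (i,3) \<and> v = (i+1,3))
      \<or> (i + 1 = n \<and> u = (i,2) \<and> v = (0,3))
      \<or> (i + 1 = n \<and> u = (i,3) \<and> v = (0,2)))"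
  unfolding fs_arc_def by (smt (verit) mod_nx)

lemma nx_lt: "i < n \<Longrightarrow> nx n i < n" by (auto simp: nx_def)
lemma pv_lt: "i < n \<Longrightarrow> pv n i < n" by (auto simp: pv_def)
lemma nx_eq: "i < n \<Longrightarrow> j < n \<Longrightarrow> (nx n j = i) = (j = pv n i)"
  by (auto simp: nx_def pv_def)

lemma nx_pv_id: "i < n \<Longrightarrow> nx n (pv n i) = i" by (auto simp: nx_def pv_def)

lemma nbr0p: assumes "n \<ge> 3" "i < n"
  shows "fs_adj n (a,b) (i,0) \<longleftrightarrow> (a,b) = (i,1) \<or> (a,b) = (nx n i,0) \<or> (a,b) = (pv n i, 0)"
proof -
  have "pv n i < n" using assms pv_lt by blast
  then show ?thesis
  using assms unfolding fs_adj_def arc_alt using nx_eq[of i n] by (auto simp: nx_pv_id)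
qed

lemma nbr1p: assumes "n \<ge> 3" "i < n"
  shows "fs_adj n (a,b) (i,1) \<longleftrightarrow> (a,b) = (i,0) \<or> (a,b) = (i,2) \<or> (a,b) = (i,3)"
  using assms unfolding fs_adj_def arc_alt by auto

lemma nbr2p: assumes "n \<ge> 3" "i < n"
  shows "fs_adj n (a,b) (i,2) \<longleftrightarrow> (a,b) = (i,1) \<or> (a,b) = (nx n i, if i+1<n then 2 else 3)
     \<or> (a,b) = (pv n i, if i = 0 then 3 else 2)"
  using assms unfolding fs_adj_def arc_alt nx_def pv_def
  by (cases "i = 0"; cases "i+1<n"; cases "b = 2"; cases "b=3"; auto)

lemma nbr3p: assumes "n \<ge> 3" "i < n"
  shows "fs_adj n (a,b) (i,3) \<longleftrightarrow> (a,b) = (i,1) \<or> (a,b) = (nx n i, if i+1<n then 3 else 2)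
     \<or> (a,b) = (pv n i, if i = 0 then 2 else 3)"
  using assms unfolding fs_adj_def arc_alt nx_def pv_def
  by (cases "i = 0"; cases "i+1<n"; cases "b = 2"; cases "b=3"; auto)

lemmas nbrp = nbr0p nbr1p nbr2p nbr3p

lemma nbr0: "n \<ge> 3 \<Longrightarrow> i < n \<Longrightarrow>
   fs_adj n w (i,0) \<longleftrightarrow> w = (i,1) \<or> w = (nx n i,0) \<or> w = (pv n i, 0)"
  by (cases w) (simp only: nbr0p)
lemma nbr1: "n \<ge> 3 \<Longrightarrow> i < n \<Longrightarrow>
   fs_adj n w (i,1) \<longleftrightarrow> w = (i,0) \<or> w = (i,2) \<or> w = (i,3)"
  by (cases w) (simp only: nbr1p)
lemma nbr2: "n \<ge> 3 \<Longrightarrow> i < n \<Longrightarrow>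
   fs_adj n w (i,2) \<longleftrightarrow> w = (i,1) \<or> w = (nx n i, if i+1<n then 2 else 3)
     \<or> w = (pv n i, if i = 0 then 3 else 2)"
  by (cases w) (simp only: nbr2p)
lemma nbr3: "n \<ge> 3 \<Longrightarrow> i < n \<Longrightarrow>
   fs_adj n w (i,3) \<longleftrightarrow> w = (i,1) \<or> w = (nx n i, if i+1<n then 3 else 2)
     \<or> w = (pv n i, if i = 0 then 2 else 3)"
  by (cases w) (simp only: nbr3p)

lemma nx_ne: "n \<ge> 3 \<Longrightarrow> i < n \<Longrightarrow> nx n i \<noteq> i" by (auto simp: nx_def)
lemma pv_ne: "n \<ge> 3 \<Longrightarrow> i < n \<Longrightarrow> pv n i \<noteq> i" by (auto simp: pv_def)
lemma nx_pv: "n \<ge> 3 \<Longrightarrow> i < n \<Longrightarrow> nx n i \<noteq> pv n i" by (auto simp: pv_def nx_def)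

lemma adj_sym: "fs_adj n u v = fs_adj n v u"
  unfolding fs_adj_def by blast

lemma adj_verts: "fs_adj n u v \<Longrightarrow> u \<in> fs_verts n \<and> v \<in> fs_verts n"
  unfolding fs_adj_def arc_alt fs_verts_def using nx_lt by fastforce

lemma conn0: assumes "n \<ge> 3" shows "i < n \<Longrightarrow> (fs_adj n)\<^sup>*\<^sup>* (i,0) (0,0)"
proof (induction i)
  case 0 then show ?case by simp
next
  case (Suc j)
  have "fs_adj n (Suc j,0) (j,0)" using Suc.prems assms by (simp add: nbr0p nx_def)
  then show ?case using Suc by (meson Suc_lessD converse_rtranclp_into_rtranclp)
qed

lemma conn: assumes "n \<ge> 3" "u \<in> fs_verts n" shows "(fs_adj n)\<^sup>*\<^sup>* u (0,0)"
proof -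
  obtain i k where u: "u = (i,k)" "i < n" "k < 4" using assms unfolding fs_verts_def by auto
  have c0: "(fs_adj n)\<^sup>*\<^sup>* (i,0) (0,0)" using conn0 assms u by simp
  have c1: "(fs_adj n)\<^sup>*\<^sup>* (i,1) (0,0)"
    using c0 nbr0p[OF assms(1) u(2), of i 1] by (meson converse_rtranclp_into_rtranclp)
  have "k = 0 \<or> k = 1 \<or> k = 2 \<or> k = 3" using u by auto
  moreover have "(fs_adj n)\<^sup>*\<^sup>* (i,2) (0,0)"
    using c1 nbr1p[OF assms(1) u(2), of i 2] by (meson converse_rtranclp_into_rtranclp)
  moreover have "(fs_adj n)\<^sup>*\<^sup>* (i,3) (0,0)"
    using c1 nbr1p[OF assms(1) u(2), of i 3] by (meson converse_rtranclp_into_rtranclp)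
  ultimately show ?thesis using c0 c1 u by auto
qed

lemma rtr_sym: "(fs_adj n)\<^sup>*\<^sup>* u v \<Longrightarrow> (fs_adj n)\<^sup>*\<^sup>* v u"
proof (induction rule: rtranclp_induct)
  case base then show ?case by simp
next
  case (step y z) then show ?case using adj_sym
    by (metis converse_rtranclp_into_rtranclp)
qed

lemma walk_ex: assumes "n \<ge> 3" "u \<in> fs_verts n" "v \<in> fs_verts n"
  shows "\<exists>k. (fs_adj n ^^ k) u v"
proof -
  have "(fs_adj n)\<^sup>*\<^sup>* u v" using conn[OF assms(1,2)] rtr_sym[OF conn[OF assms(1,3)]] by simp
  then show ?thesis by (simp add: rtranclp_power)
qed

lemma dist_walk: "n \<ge> 3 \<Longrightarrow> u \<in> fs_verts n \<Longrightarrow> v \<in> fs_verts n \<Longrightarrow>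
   (fs_adj n ^^ fs_dist n u v) u v"
  unfolding fs_dist_def using walk_ex by (metis LeastI_ex)

lemma dist_le: "(fs_adj n ^^ k) u v \<Longrightarrow> fs_dist n u v \<le> k"
  unfolding fs_dist_def by (rule Least_le)

lemma dist_self: "fs_dist n u u = 0"
  using dist_le[where n=n and k=0 and u=u and v=u] by simp

lemma dist0: "n \<ge> 3 \<Longrightarrow> u \<in> fs_verts n \<Longrightarrow> v \<in> fs_verts n \<Longrightarrow> fs_dist n u v = 0 \<Longrightarrow> u = v"
  using dist_walk[of n u v] by simp

lemma dist_adj: "fs_adj n u v \<Longrightarrow> fs_dist n u v \<le> 1"
  using dist_le[where n=n and k=1 and u=u and v=v] by (simp only: relpowp_1)

lemma dist1: "n \<ge> 3 \<Longrightarrow> u \<in> fs_verts n \<Longrightarrow> v \<in> fs_verts n \<Longrightarrow> fs_dist n u v \<le> 1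
   \<Longrightarrow> u = v \<or> fs_adj n u v"
  using dist_walk[of n u v] by (cases "fs_dist n u v") auto

lemma dist2: "fs_adj n w z \<Longrightarrow> fs_adj n z t \<Longrightarrow> fs_dist n w t \<le> 2"
proof -
  assume "fs_adj n w z" "fs_adj n z t"
  then have "(fs_adj n ^^ Suc 1) w t" by (metis relpowp_1 relpowp_Suc_I)
  then show ?thesis using dist_le by (metis numeral_2_eq_2 One_nat_def)
qed

lemma dist_tri: assumes "n \<ge> 3" "u \<in> fs_verts n" "v \<in> fs_verts n" "w \<in> fs_verts n"
  shows "fs_dist n u w \<le> fs_dist n u v + fs_dist n v w"
proof -
  have "(fs_adj n ^^ (fs_dist n u v + fs_dist n v w)) u w"
    using dist_walk[OF assms(1,2,3)] dist_walk[OF assms(1,3,4)] by (auto simp: relpowp_add)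
  then show ?thesis by (rule dist_le)
qed

lemma dist_step: assumes "n \<ge> 3" "u \<in> fs_verts n" "v \<in> fs_verts n" "u \<noteq> v"
  shows "\<exists>w. fs_adj n w v \<and> fs_dist n u w + 1 \<le> fs_dist n u v"
proof -
  have W: "(fs_adj n ^^ fs_dist n u v) u v" by (rule dist_walk[OF assms(1-3)])
  obtain m where m: "fs_dist n u v = Suc m"
    using dist0[OF assms(1-3)] assms(4) by (cases "fs_dist n u v") auto
  from W m obtain w where "(fs_adj n ^^ m) u w" "fs_adj n w v" by (auto elim: relpowp_Suc_E)
  then show ?thesis using dist_le m by fastforce
qed


lemma sd_le: "finite X \<Longrightarrow> x \<in> X \<Longrightarrow> fs_setdist n s X \<le> fs_dist n s x"
  unfolding fs_setdist_def by simp

lemma sd_in: "finite X \<Longrightarrow> X \<noteq> {} \<Longrightarrow> \<exists>x\<in>X. fs_setdist n s X = fs_dist n s x"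
proof -
  assume "finite X" "X \<noteq> {}"
  then have "Min ((\<lambda>x. fs_dist n s x) ` X) \<in> (\<lambda>x. fs_dist n s x) ` X" by (intro Min_in) auto
  then show ?thesis unfolding fs_setdist_def by (metis (no_types, lifting) imageE)
qed

lemma sd_insert: "finite Z \<Longrightarrow> Z \<noteq> {} \<Longrightarrow>
   fs_setdist n s (insert v Z) = min (fs_dist n s v) (fs_setdist n s Z)"
  unfolding fs_setdist_def by simp

lemma sd0: assumes "n \<ge> 3" "s \<in> fs_verts n" "X \<subseteq> fs_verts n" "finite X" "X \<noteq> {}"
  shows "fs_setdist n s X = 0 \<longleftrightarrow> s \<in> X"
proof
  assume "fs_setdist n s X = 0"
  then obtain x where "x \<in> X" "fs_dist n s x = 0" using sd_in[OF assms(4,5)] by metis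
  then show "s \<in> X" using dist0[OF assms(1,2)] assms(3) by blast
next
  assume "s \<in> X" then show "fs_setdist n s X = 0" using sd_le[OF assms(4)] dist_self
    by (metis le_zero_eq)
qed

lemma sd1: assumes "n \<ge> 3" "s \<in> fs_verts n" "X \<subseteq> fs_verts n" "finite X" "X \<noteq> {}"
   "fs_setdist n s X \<le> 1"
  shows "\<exists>y\<in>X. y = s \<or> fs_adj n s y"
proof -
  obtain x where "x \<in> X" "fs_setdist n s X = fs_dist n s x" using sd_in[OF assms(4,5)] by metis
  then show ?thesis using dist1[OF assms(1,2), of x] assms(3,6) by auto
qed

lemma cover1: assumes "n \<ge> 3" "s \<in> fs_verts n" "v \<in> fs_verts n" "s \<noteq> v"
  "T \<subseteq> fs_verts n" "finite T"
  "\<forall>w. fs_adj n w v \<longrightarrow> (\<exists>t\<in>T. t = w \<or> fs_adj n w t)"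
  shows "fs_setdist n s T \<le> fs_dist n s v"
proof -
  obtain w where w: "fs_adj n w v" "fs_dist n s w + 1 \<le> fs_dist n s v"
    using dist_step[OF assms(1-4)] by blast
  have wv: "w \<in> fs_verts n" using adj_verts w(1) by blast
  obtain t where t: "t \<in> T" "t = w \<or> fs_adj n w t" using assms(7) w(1) by blast
  have "fs_dist n w t \<le> 1" using t(2) dist_adj[of n w t] dist_self[of n w] by auto
  moreover have "fs_dist n s t \<le> fs_dist n s w + fs_dist n w t"
    using dist_tri[OF assms(1,2) wv] t(1) assms(5) by blast
  moreover have "fs_setdist n s T \<le> fs_dist n s t" using sd_le[OF assms(6) t(1)] .
  ultimately show ?thesis using w(2) by linarith
qed

lemma cover2: assumes "n \<ge> 3" "s \<in> fs_verts n" "v \<in> fs_verts n" "s \<noteq> v"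
  "u \<in> fs_verts n" "s \<noteq> u" "fs_adj n u v"
  "T \<subseteq> fs_verts n" "finite T"
  "\<forall>w. fs_adj n w v \<longrightarrow> w \<noteq> u \<longrightarrow> (\<exists>t\<in>T. t = w \<or> fs_adj n w t)"
  "\<forall>w. fs_adj n w u \<longrightarrow> w \<noteq> v \<longrightarrow> (\<exists>t\<in>T. \<exists>z. fs_adj n w z \<and> fs_adj n z t)"
  shows "fs_setdist n s T \<le> fs_dist n s v"
proof -
  obtain w where w: "fs_adj n w v" "fs_dist n s w + 1 \<le> fs_dist n s v"
    using dist_step[OF assms(1-4)] by blast
  have wv: "w \<in> fs_verts n" using adj_verts w(1) by blast
  show ?thesis
  proof (cases "w = u")
    case False
    obtain t where t: "t \<in> T" "t = w \<or> fs_adj n w t" using assms(10) w(1) False by blast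
    have "fs_dist n w t \<le> 1" using t(2) dist_adj[of n w t] dist_self[of n w] by auto
    moreover have "fs_dist n s t \<le> fs_dist n s w + fs_dist n w t"
      using dist_tri[OF assms(1,2) wv] t(1) assms(8) by blast
    moreover have "fs_setdist n s T \<le> fs_dist n s t" using sd_le[OF assms(9) t(1)] .
    ultimately show ?thesis using w(2) by linarith
  next
    case True
    obtain w' where w': "fs_adj n w' u" "fs_dist n s w' + 1 \<le> fs_dist n s u"
      using dist_step[OF assms(1,2,5,6)] by blast
    have wv': "w' \<in> fs_verts n" using adj_verts w'(1) by blast
    have "w' \<noteq> v"
    proof
      assume "w' = v"
      then have "fs_dist n s v + 1 \<le> fs_dist n s u" using w'(2) by simp
      moreover have "fs_dist n s u + 1 \<le> fs_dist n s v" using w(2) True by simp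
      ultimately show False by linarith
    qed
    then obtain t z where t: "t \<in> T" "fs_adj n w' z" "fs_adj n z t" using assms(11) w'(1) by blast
    have "fs_dist n w' t \<le> 2" using dist2 t(2,3) by blast
    moreover have "fs_dist n s t \<le> fs_dist n s w' + fs_dist n w' t"
      using dist_tri[OF assms(1,2) wv'] t(1) assms(8) by blast
    moreover have "fs_setdist n s T \<le> fs_dist n s t" using sd_le[OF assms(9) t(1)] .
    moreover have "fs_dist n s u + 1 \<le> fs_dist n s v" using w(2) True by simp
    ultimately show ?thesis using w'(2) by linarith
  qed
qed

lemma card_ins_le: "finite Z \<Longrightarrow> card Z \<le> 2 \<Longrightarrow> card (insert v Z) \<le> 3"
  by (metis card_insert_le_m1 card_insert_if le_SucI numeral_3_eq_3 numeral_2_eq_2 le_imp_less_Suc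
       Suc_le_mono)

lemma badpair_nonadj:
  assumes "n \<ge> 3" "three_resolving n S" "u \<in> fs_verts n" "v \<in> fs_verts n" "u \<noteq> v"
    "u \<notin> S" "v \<notin> S" "Z \<subseteq> fs_verts n" "finite Z" "Z \<noteq> {}" "card Z \<le> 2" "u \<notin> Z" "v \<notin> Z"
    "\<forall>w. fs_adj n w v \<longrightarrow> (\<exists>t\<in>insert u Z. t = w \<or> fs_adj n w t)"
    "\<forall>w. fs_adj n w u \<longrightarrow> (\<exists>t\<in>insert v Z. t = w \<or> fs_adj n w t)"
  shows False
proof -
  let ?X = "insert u Z" and ?Y = "insert v Z"
  have "?X \<noteq> ?Y" using assms(5,12) by blast
  moreover have "card ?X \<le> 3" "card ?Y \<le> 3" by (simp_all add: card_ins_le[OF assms(9,11)] card_mono[OF assms(9)] assms(11))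
  ultimately obtain s where s: "s \<in> S" "fs_setdist n s ?X \<noteq> fs_setdist n s ?Y"
    using assms(2,3,4,8) unfolding three_resolving_def by (metis insert_not_empty insert_subset)
  have sv: "s \<in> fs_verts n" "s \<noteq> u" "s \<noteq> v" using s(1) assms(2,6,7) unfolding three_resolving_def
    by auto
  have a: "fs_setdist n s ?X \<le> fs_dist n s v"
    by (rule cover1[OF assms(1) sv(1) assms(4) sv(3)]) (use assms in auto)
  have b: "fs_setdist n s ?Y \<le> fs_dist n s u"
    by (rule cover1[OF assms(1) sv(1) assms(3) sv(2)]) (use assms in auto)
  show False using a b s(2) unfolding sd_insert[OF assms(9,10)] by linarith
qed

lemma badpair_adj:
  assumes "n \<ge> 3" "three_resolving n S" "u \<in> fs_verts n" "v \<in> fs_verts n" "u \<noteq> v"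
    "u \<notin> S" "v \<notin> S" "Z \<subseteq> fs_verts n" "finite Z" "Z \<noteq> {}" "card Z \<le> 2" "v \<notin> Z"
    "fs_adj n u v"
    "\<forall>w. fs_adj n w v \<longrightarrow> w \<noteq> u \<longrightarrow> (\<exists>t\<in>Z. t = w \<or> fs_adj n w t)"
    "\<forall>w. fs_adj n w u \<longrightarrow> w \<noteq> v \<longrightarrow> (\<exists>t\<in>Z. \<exists>z. fs_adj n w z \<and> fs_adj n z t)"
  shows False
proof -
  let ?X = "Z" and ?Y = "insert v Z"
  have "?X \<noteq> ?Y" using assms(12) by blast
  moreover have "card ?X \<le> 3" "card ?Y \<le> 3" using assms(11) card_ins_le[OF assms(9,11), of v] by linarith+
  ultimately obtain s where s: "s \<in> S" "fs_setdist n s ?X \<noteq> fs_setdist n s ?Y"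
    using assms(2,3,4,8,10) unfolding three_resolving_def by (metis insert_not_empty insert_subset)
  have sv: "s \<in> fs_verts n" "s \<noteq> u" "s \<noteq> v" using s(1) assms(2,6,7) unfolding three_resolving_def
    by auto
  have a: "fs_setdist n s ?X \<le> fs_dist n s v"
    by (rule cover2[OF assms(1) sv(1) assms(4) sv(3) assms(3) sv(2) assms(13) assms(8,9)])
       (use assms in auto)
  show False using a s(2) unfolding sd_insert[OF assms(9,10)] by linarith
qed


lemma star_pair:
  assumes n: "n \<ge> 3" and R: "three_resolving n S" and i: "i < n"
    and k: "k1 < k2" "k2 < 4" and m: "(i,k1) \<notin> S" "(i,k2) \<notin> S"
  shows False
proof -
  define p where "p = pv n i"
  define q where "q = nx n i"
  define c1 where "c1 = (if i+1<n then 2 else 3::nat)"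
  define d1 where "d1 = (if i+1<n then 3 else 2::nat)"
  define c2 where "c2 = (if i=0 then 3 else 2::nat)"
  define d2 where "d2 = (if i=0 then 2 else 3::nat)"
  have pq: "p < n" "q < n" "p \<noteq> i" "q \<noteq> i" "p \<noteq> q"
    unfolding p_def q_def using pv_lt nx_lt pv_ne nx_ne nx_pv[OF n i] n i by auto
  define Z where "Z = {(p,1::nat),(q,1::nat)}"
  have Z: "Z \<subseteq> fs_verts n" "finite Z" "Z \<noteq> {}" "card Z \<le> 2"
    unfolding Z_def fs_verts_def using pq by auto
  have nZ: "(i,k) \<notin> Z" for k unfolding Z_def using pq by auto
  have V: "(i,k) \<in> fs_verts n" if "k < 4" for k using i that unfolding fs_verts_def by auto
  have F0: "fs_adj n (i,1) (i,0)" "fs_adj n (i,1) (i,2)" "fs_adj n (i,1) (i,3)"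
    "fs_adj n (i,0) (i,1)" "fs_adj n (i,2) (i,1)" "fs_adj n (i,3) (i,1)"
    "fs_adj n (q,0) (q,1)" "fs_adj n (p,0) (p,1)"
    "fs_adj n (q,c1) (q,1)" "fs_adj n (p,c2) (p,1)"
    "fs_adj n (q,d1) (q,1)" "fs_adj n (p,d2) (p,1)"
    using n i pq unfolding c1_def c2_def d1_def d2_def
    by (simp_all add: nbrp[OF n] nbr1p[OF n, simplified])
  have F1: "fs_adj n (q,0) (i,0)" "fs_adj n (q,c1) (i,2)" "fs_adj n (q,d1) (i,3)"
    using n i unfolding c1_def d1_def q_def by (simp_all add: nbrp)
  have F2: "fs_adj n (i,0) (q,0)" "fs_adj n (i,2) (q,c1)" "fs_adj n (i,3) (q,d1)"
    using F1 adj_sym by metis+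
  note F = F0 F2
  have N0: "fs_adj n w (i,0) \<Longrightarrow> w = (i,1) \<or> w = (q,0) \<or> w = (p,0)" for w
    using nbr0[OF n i] p_def q_def by simp
  have N1: "fs_adj n w (i,1) \<Longrightarrow> w = (i,0) \<or> w = (i,2) \<or> w = (i,3)" for w
    using nbr1[OF n i] by simp
  have N2: "fs_adj n w (i,2) \<Longrightarrow> w = (i,1) \<or> w = (q,c1) \<or> w = (p,c2)" for w
    using nbr2[OF n i] p_def q_def c1_def c2_def by simp
  have N3: "fs_adj n w (i,3) \<Longrightarrow> w = (i,1) \<or> w = (q,d1) \<or> w = (p,d2)" for w
    using nbr3[OF n i] p_def q_def d1_def d2_def by simp
  have "k1 = 0 \<and> k2 = 1 \<or> k1 = 0 \<and> k2 = 2 \<or> k1 = 0 \<and> k2 = 3 \<or> k1 = 1 \<and> k2 = 2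
     \<or> k1 = 1 \<and> k2 = 3 \<or> k1 = 2 \<and> k2 = 3" using k by auto
  have Zq: "(q,1) \<in> Z" and Zp: "(p,1) \<in> Z" unfolding Z_def by auto
  have ne: "(i,k) \<noteq> (i,k')" if "k \<noteq> k'" for k k' using that by simp
  have Ca: "\<forall>w. fs_adj n w (i,0) \<longrightarrow> w \<noteq> (i,1) \<longrightarrow> (\<exists>t\<in>Z. t = w \<or> fs_adj n w t)"
  proof (intro allI impI)
    fix w assume "fs_adj n w (i,0)" "w \<noteq> (i,1)"
    then have "w = (q,0) \<or> w = (p,0)" using N0 by blast
    then show "\<exists>t\<in>Z. t = w \<or> fs_adj n w t" using F Zq Zp by blast
  qed
  have Cc: "\<forall>w. fs_adj n w (i,2) \<longrightarrow> w \<noteq> (i,1) \<longrightarrow> (\<exists>t\<in>Z. t = w \<or> fs_adj n w t)"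
  proof (intro allI impI)
    fix w assume "fs_adj n w (i,2)" "w \<noteq> (i,1)"
    then have "w = (q,c1) \<or> w = (p,c2)" using N2 by blast
    then show "\<exists>t\<in>Z. t = w \<or> fs_adj n w t" using F Zq Zp by blast
  qed
  have Cd: "\<forall>w. fs_adj n w (i,3) \<longrightarrow> w \<noteq> (i,1) \<longrightarrow> (\<exists>t\<in>Z. t = w \<or> fs_adj n w t)"
  proof (intro allI impI)
    fix w assume "fs_adj n w (i,3)" "w \<noteq> (i,1)"
    then have "w = (q,d1) \<or> w = (p,d2)" using N3 by blast
    then show "\<exists>t\<in>Z. t = w \<or> fs_adj n w t" using F Zq Zp by blast
  qed
  have Cb: "\<forall>w. fs_adj n w (i,1) \<longrightarrow> w \<noteq> (i,k) \<longrightarrow> (\<exists>t\<in>Z. \<exists>z. fs_adj n w z \<and> fs_adj n z t)"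
    for k
  proof (intro allI impI)
    fix w assume "fs_adj n w (i,1)" "w \<noteq> (i,k)"
    then have "w = (i,0) \<or> w = (i,2) \<or> w = (i,3)" using N1 by blast
    then show "\<exists>t\<in>Z. \<exists>z. fs_adj n w z \<and> fs_adj n z t" using F Zq by blast
  qed
  have Ins: "\<forall>w. fs_adj n w (i,k) \<longrightarrow> w \<noteq> (i,1) \<longrightarrow> (\<exists>t\<in>insert u Z. t = w \<or> fs_adj n w t)"
    if "\<forall>w. fs_adj n w (i,k) \<longrightarrow> w \<noteq> (i,1) \<longrightarrow> (\<exists>t\<in>Z. t = w \<or> fs_adj n w t)" for k u
    using that by blast
  have Ins2: "\<forall>w. fs_adj n w (i,k) \<longrightarrow> (\<exists>t\<in>insert (i,k') Z. t = w \<or> fs_adj n w t)"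
    if "\<forall>w. fs_adj n w (i,k) \<longrightarrow> w \<noteq> (i,1) \<longrightarrow> (\<exists>t\<in>Z. t = w \<or> fs_adj n w t)"
       "fs_adj n (i,1) (i,k')" for k k'
    using that by blast
  have "k1 = 0 \<and> k2 = 1 \<or> k1 = 0 \<and> k2 = 2 \<or> k1 = 0 \<and> k2 = 3 \<or> k1 = 1 \<and> k2 = 2
     \<or> k1 = 1 \<and> k2 = 3 \<or> k1 = 2 \<and> k2 = 3" using k by auto
  then show False
  proof (elim disjE conjE)
    assume kk: "k1 = 0" "k2 = 1"
    show False
      by (rule badpair_adj[OF n R V[of 1] V[of 0] ne _ _ Z nZ F(1) Ca Cb]) (use m kk in auto)
  next
    assume kk: "k1 = 1" "k2 = 2"
    show False
      by (rule badpair_adj[OF n R V[of 1] V[of 2] ne _ _ Z nZ F(2) Cc Cb]) (use m kk in auto)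
  next
    assume kk: "k1 = 1" "k2 = 3"
    show False
      by (rule badpair_adj[OF n R V[of 1] V[of 3] ne _ _ Z nZ F(3) Cd Cb]) (use m kk in auto)
  next
    assume kk: "k1 = 0" "k2 = 2"
    show False
      by (rule badpair_nonadj[OF n R V[of 0] V[of 2] ne _ _ Z nZ nZ Ins2[OF Cc F(1)] Ins2[OF Ca F(2)]])
         (use m kk in auto)
  next
    assume kk: "k1 = 0" "k2 = 3"
    show False
      by (rule badpair_nonadj[OF n R V[of 0] V[of 3] ne _ _ Z nZ nZ Ins2[OF Cd F(1)] Ins2[OF Ca F(3)]])
         (use m kk in auto)
  next
    assume kk: "k1 = 2" "k2 = 3"
    show False
      by (rule badpair_nonadj[OF n R V[of 2] V[of 3] ne _ _ Z nZ nZ Ins2[OF Cd F(2)] Ins2[OF Cc F(3)]])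
         (use m kk in auto)
  qed
qed


definition S0 :: "nat \<Rightarrow> (nat \<times> nat) set" where
  "S0 n = {(i,k). i < n \<and> k < 4 \<and> k \<noteq> 1}"

lemma S0_verts: "S0 n \<subseteq> fs_verts n" unfolding S0_def fs_verts_def by auto

lemma distinct_cd: "p \<noteq> i \<Longrightarrow> q \<noteq> i \<Longrightarrow> p \<noteq> q \<Longrightarrow> (c1::nat) \<noteq> d1 \<Longrightarrow> (c2::nat) \<noteq> d2
  \<Longrightarrow> yc = (i,2::nat) \<or> yc = (q,c1) \<or> yc = (p,c2) \<Longrightarrow> yd = (i,3) \<or> yd = (q,d1) \<or> yd = (p,d2) \<Longrightarrow> yc \<noteq> yd"
  by auto

lemma ub_aux:
  assumes n: "n \<ge> 3" and XY: "X \<subseteq> fs_verts n" "Y \<subseteq> fs_verts n" "finite X" "finite Y"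
    "X \<noteq> {}" "Y \<noteq> {}" "card X \<le> 3" and x: "x \<in> X" "x \<notin> Y"
  shows "\<exists>s\<in>S0 n. fs_setdist n s X \<noteq> fs_setdist n s Y"
proof (rule ccontr)
  assume "\<not> ?thesis"
  then have eq: "\<And>s. s \<in> S0 n \<Longrightarrow> fs_setdist n s X = fs_setdist n s Y" by blast
  obtain i k where ik: "x = (i,k)" "i < n" "k < 4" using x XY unfolding fs_verts_def by auto
  show False
  proof (cases "k = 1")
    case False
    then have xs: "x \<in> S0 n" using ik unfolding S0_def by auto
    have xv: "x \<in> fs_verts n" using x XY by auto
    have "fs_setdist n x X = 0" using sd0[OF n xv XY(1,3,5)] x by simp
    moreover have "fs_setdist n x Y \<noteq> 0" using sd0[OF n xv XY(2,4,6)] x by simp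
    ultimately show False using eq[OF xs] by simp
  next
    case True
    define p where "p = pv n i"
    define q where "q = nx n i"
    define c1 where "c1 = (if i+1<n then 2 else 3::nat)"
    define d1 where "d1 = (if i+1<n then 3 else 2::nat)"
    define c2 where "c2 = (if i=0 then 3 else 2::nat)"
    define d2 where "d2 = (if i=0 then 2 else 3::nat)"
    have pq: "p < n" "q < n" "p \<noteq> i" "q \<noteq> i" "p \<noteq> q"
      unfolding p_def q_def using pv_lt nx_lt pv_ne nx_ne nx_pv[OF n ik(2)] n ik by auto
    have memY: "y \<in> X" if "y \<in> Y" "y \<in> S0 n" for y
    proof -
      have yv: "y \<in> fs_verts n" using that XY by auto
      have "fs_setdist n y Y = 0" using sd0[OF n yv XY(2,4,6)] that by simp
      then have "fs_setdist n y X = 0" using eq[OF that(2)] by simp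
      then show ?thesis using sd0[OF n yv XY(1,3,5)] by simp
    qed
    have near: "\<exists>y\<in>Y. y = s \<or> fs_adj n y s" if "s \<in> S0 n" "fs_adj n x s" for s
    proof -
      have sv: "s \<in> fs_verts n" using that S0_verts by auto
      have "fs_setdist n s X \<le> 1"
        using sd_le[OF XY(3) x(1), of n s] dist_adj[of n s x] that(2) adj_sym[of n x s] by linarith
      then have "fs_setdist n s Y \<le> 1" using eq[OF that(1)] by simp
      then show ?thesis using sd1[OF n sv XY(2,4,6)] adj_sym[of n s] by blast
    qed
    have N0: "fs_adj n w (i,0) \<Longrightarrow> w = (i,1) \<or> w = (q,0) \<or> w = (p,0)" for w
      using nbr0[OF n ik(2)] p_def q_def by simp
    have N2: "fs_adj n w (i,2) \<Longrightarrow> w = (i,1) \<or> w = (q,c1) \<or> w = (p,c2)" for w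
      using nbr2[OF n ik(2)] p_def q_def c1_def c2_def by simp
    have N3: "fs_adj n w (i,3) \<Longrightarrow> w = (i,1) \<or> w = (q,d1) \<or> w = (p,d2)" for w
      using nbr3[OF n ik(2)] p_def q_def d1_def d2_def by simp
    have A: "fs_adj n x (i,0)" "fs_adj n x (i,2)" "fs_adj n x (i,3)"
      using ik True n by (auto simp: nbrp)
    have B: "(i,0) \<in> S0 n" "(i,2) \<in> S0 n" "(i,3) \<in> S0 n" using ik unfolding S0_def by auto
    obtain ya where ya: "ya \<in> Y" "ya = (i,0) \<or> fs_adj n ya (i,0)" using near[OF B(1) A(1)] by blast
    obtain yc where yc: "yc \<in> Y" "yc = (i,2) \<or> fs_adj n yc (i,2)" using near[OF B(2) A(2)] by blast
    obtain yd where yd: "yd \<in> Y" "yd = (i,3) \<or> fs_adj n yd (i,3)" using near[OF B(3) A(3)] by blast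
    have xi: "x = (i,1)" using ik True by simp
    have ya': "ya = (i,0) \<or> ya = (q,0) \<or> ya = (p,0)" using ya N0 x(2) xi by blast
    have yc': "yc = (i,2) \<or> yc = (q,c1) \<or> yc = (p,c2)" using yc N2 x(2) xi by blast
    have yd': "yd = (i,3) \<or> yd = (q,d1) \<or> yd = (p,d2)" using yd N3 x(2) xi by blast
    have cd: "c1 \<noteq> d1" "c2 \<noteq> d2" "c1 \<in> {2,3}" "d1 \<in> {2,3}" "c2 \<in> {2,3}" "d2 \<in> {2,3}"
      unfolding c1_def c2_def d1_def d2_def by auto
    have inS: "(j,k) \<in> S0 n" if "j < n" "k < 4" "k \<noteq> 1" for j k
      using that unfolding S0_def by simp
    have c14: "c1 < 4" "c1 \<noteq> 1" "c2 < 4" "c2 \<noteq> 1" "d1 < 4" "d1 \<noteq> 1" "d2 < 4" "d2 \<noteq> 1"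
      unfolding c1_def c2_def d1_def d2_def by auto
    have S: "ya \<in> S0 n" "yc \<in> S0 n" "yd \<in> S0 n"
    proof -
      have s0: "(i,0) \<in> S0 n" "(q,0) \<in> S0 n" "(p,0) \<in> S0 n" "(i,2) \<in> S0 n" "(q,c1) \<in> S0 n"
        "(p,c2) \<in> S0 n" "(i,3) \<in> S0 n" "(q,d1) \<in> S0 n" "(p,d2) \<in> S0 n"
        using ik(2) pq(1,2) c14 unfolding S0_def by simp_all
      show "ya \<in> S0 n" using ya' s0(1-3) by (elim disjE) simp_all
      show "yc \<in> S0 n" using yc' s0(4-6) by (elim disjE) simp_all
      show "yd \<in> S0 n" using yd' s0(7-9) by (elim disjE) simp_all
    qed
    have sa: "snd ya = 0" using ya' by auto
    have sc: "snd yc = 2 \<or> snd yc = 3" using yc' cd(3,5) by auto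
    have sd: "snd yd = 2 \<or> snd yd = 3" using yd' cd(4,6) by auto
    have sn: "snd ya = 0" "snd yc \<noteq> 1" "snd yd \<noteq> 1" "snd yc \<noteq> 0" "snd yd \<noteq> 0"
      using sa sc sd by auto
    have cyd: "yc \<noteq> yd"
      by (rule distinct_cd[OF pq(3-5) cd(1,2) yc' yd'])
    have distinct: "x \<notin> {ya, yc, yd}" "ya \<notin> {yc, yd}" "yc \<noteq> yd"
      using sn xi cyd by auto
    have "{x, ya, yc, yd} \<subseteq> X" using memY ya(1) yc(1) yd(1) S x(1) by blast
    then have "card {x, ya, yc, yd} \<le> card X" using XY(3) by (rule card_mono[rotated])
    moreover have "card {x, ya, yc, yd} = 4" using distinct by auto
    ultimately show False using XY(7) by simp
  qed
qed

lemma ub: assumes "n \<ge> 3" shows "three_resolving n (S0 n)"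
  unfolding three_resolving_def
proof (intro conjI allI impI)
  show "S0 n \<subseteq> fs_verts n" by (rule S0_verts)
next
  fix X Y assume H: "X \<subseteq> fs_verts n" "Y \<subseteq> fs_verts n" "X \<noteq> {}" "Y \<noteq> {}"
    "card X \<le> 3" "card Y \<le> 3" "X \<noteq> Y"
  have fin: "finite X" "finite Y" using H(1,2) finite_subset[of _ "fs_verts n"] unfolding fs_verts_def by simp_all
  show "\<exists>s\<in>S0 n. fs_setdist n s X \<noteq> fs_setdist n s Y"
  proof (cases "\<exists>x. x \<in> X \<and> x \<notin> Y")
    case True
    then obtain x where "x \<in> X" "x \<notin> Y" by blast
    then show ?thesis using ub_aux[OF assms H(1,2) fin H(3,4,5)] by blast
  next
    case False
    then obtain x where "x \<in> Y" "x \<notin> X" using H(7) by blast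
    then show ?thesis using ub_aux[OF assms H(2,1) fin(2,1) H(4,3,6)] by metis
  qed
qed

lemma card_S0: "card (S0 n) = 3 * n"
proof -
  have "S0 n = {0..<n} \<times> {0,2,3}" unfolding S0_def by auto
  then show ?thesis by (simp add: card_cartesian_product)
qed

lemma lb: assumes n: "n \<ge> 3" and R: "three_resolving n S" shows "3 * n \<le> card S"
proof -
  have Sv: "S \<subseteq> fs_verts n" using R unfolding three_resolving_def by blast
  have fv: "finite (fs_verts n)" unfolding fs_verts_def by simp
  have cv: "card (fs_verts n) = 4 * n" unfolding fs_verts_def by (simp add: card_cartesian_product)
  let ?M = "fs_verts n - S"
  have inj: "inj_on fst ?M"
  proof (rule inj_onI)
    fix u v assume uv: "u \<in> ?M" "v \<in> ?M" "fst u = fst v"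
    obtain i k1 where u: "u = (i,k1)" by (cases u)
    obtain j k2 where v: "v = (j,k2)" by (cases v)
    have ij: "j = i" using uv(3) u v by simp
    have e: "i < n" "k1 < 4" "k2 < 4" using uv(1,2) u v ij unfolding fs_verts_def by auto
    have m: "(i,k1) \<notin> S" "(i,k2) \<notin> S" using uv(1,2) u v ij by auto
    have "\<not> k1 < k2"
    proof
      assume "k1 < k2" then show False using star_pair[OF n R e(1) _ e(3) m] by blast
    qed
    moreover have "\<not> k2 < k1"
    proof
      assume "k2 < k1" then show False using star_pair[OF n R e(1) _ e(2) m(2,1)] by blast
    qed
    ultimately show "u = v" using u v ij by simp
  qed
  have sub: "fst ` ?M \<subseteq> {0..<n}" unfolding fs_verts_def by auto
  have "card ?M \<le> card {0..<n::nat}" by (rule card_inj_on_le[OF inj sub]) simp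
  then have M: "card ?M \<le> n" by simp
  have fS: "finite S" using finite_subset[OF Sv fv] .
  have "card ?M = card (fs_verts n) - card S" by (rule card_Diff_subset[OF fS Sv])
  moreover have "card S \<le> card (fs_verts n)" by (rule card_mono[OF fv Sv])
  ultimately show ?thesis using M cv by linarith
qed

theorem mainTheorem15:
  fixes n :: nat
  assumes "odd n" and "n \<ge> 5"
  shows "beta3 n = 3 * n"
proof -
  have n: "n \<ge> 3" using assms by simp
  show ?thesis unfolding beta3_def
  proof (rule Least_equality)
    show "\<exists>S. three_resolving n S \<and> card S = 3 * n" using ub[OF n] card_S0 by blast
  next
    fix k assume "\<exists>S. three_resolving n S \<and> card S = k"
    then show "3 * n \<le> k" using lb[OF n] by blast
  qed
qed

end
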